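(* Consider an asynchronous message-passing system of $n$ processes with reliable point-to-point channels between every pair of processes, in which up to $t$ processes may crash, with $n>2t$. For every integer $k > \frac{n-t}{n-2t}$, there exists an algorithm solving $k$-set agreement in this system.
   Context: $k$-set agreement (decisions allowed in $V\cup\{\bot\}$, $\bot$ counting as a decided value): each process proposes an initial value from a set $V$; (Validity) if all correct processes propose the same value $v$, no correct process decides a value different from $v$; (Agreement) at most $k$ distinct values are decided by correct processes; (Termination) every correct process eventually decides. A crashed process stops taking steps; a correct process never crashes. Asynchronous: messages sent between correct processes are eventually received, with no bound on delays. *)

theory Defs
  imports Main Complex_Main
begin

text \<open>
Local states and message payloads are finite S-expressions built from
values of V (the type 'v), natural numbers and lists; every algorithm with
finitary local data can be encoded in this universal type.
\<close>

datatype 'v uexp = UVal 'v | UNat nat | UList "'v uexp list"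

text \<open>
An algorithm (deterministic, one automaton per process, parametrised by the
process identity):
  alg_init p v       : initial local state of process p proposing v;
  alg_trans p s r    : one atomic step of p in local state s, receiving r
                       (None = nothing received, Some (q, m) = payload m from q);
                       returns new state and a list of (destination, payload);
  alg_dec s          : None = undecided, Some None = decided bottom,
                       Some (Some v) = decided v.
\<close>

record 'v alg =
  alg_init  :: "nat \<Rightarrow> 'v \<Rightarrow> 'v uexp"
  alg_trans :: "nat \<Rightarrow> 'v uexp \<Rightarrow> (nat \<times> 'v uexp) option \<Rightarrow> 'v uexp \<times> (nat \<times> 'v uexp) list"
  alg_dec   :: "'v uexp \<Rightarrow> 'v option option"

text \<open>
A run: at global time i process sched i takes a step; rcv i is either None
(no message received) or Some (j, m), the m-th message sent at time j;
out i is the list of messages sent at time i; st i p is the local state of p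
before time i.
\<close>

definition msg_in ::
  "(nat \<Rightarrow> nat) \<Rightarrow> (nat \<Rightarrow> (nat \<times> nat) option) \<Rightarrow> (nat \<Rightarrow> (nat \<times> 'v uexp) list)
   \<Rightarrow> nat \<Rightarrow> (nat \<times> 'v uexp) option" where
  "msg_in sched rcv out i =
     (case rcv i of None \<Rightarrow> None | Some (j, m) \<Rightarrow> Some (sched j, snd (out j ! m)))"

definition is_run ::
  "'v alg \<Rightarrow> nat \<Rightarrow> nat set \<Rightarrow> (nat \<Rightarrow> 'v) \<Rightarrow> (nat \<Rightarrow> nat)
   \<Rightarrow> (nat \<Rightarrow> (nat \<times> nat) option) \<Rightarrow> (nat \<Rightarrow> (nat \<times> 'v uexp) list)
   \<Rightarrow> (nat \<Rightarrow> nat \<Rightarrow> 'v uexp) \<Rightarrow> bool" where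
  "is_run A n F inp sched rcv out st \<longleftrightarrow>
     F \<subseteq> {..<n} \<and>
     (\<forall>p. st 0 p = alg_init A p (inp p)) \<and>
     (\<forall>i. sched i < n) \<and>
     (\<forall>i. alg_trans A (sched i) (st i (sched i)) (msg_in sched rcv out i)
            = (st (Suc i) (sched i), out i)) \<and>
     (\<forall>i q. q \<noteq> sched i \<longrightarrow> st (Suc i) q = st i q) \<and>
     (\<forall>i j m. rcv i = Some (j, m) \<longrightarrow>
            j < i \<and> m < length (out j) \<and> fst (out j ! m) = sched i) \<and>
     (\<forall>i i' x. rcv i = Some x \<longrightarrow> rcv i' = Some x \<longrightarrow> i = i') \<and>
     (\<forall>p\<in>F. \<exists>T. \<forall>i\<ge>T. sched i \<noteq> p) \<and>
     (\<forall>p\<in>{..<n} - F. \<forall>T. \<exists>i\<ge>T. sched i = p) \<and>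
     (\<forall>j m. m < length (out j) \<longrightarrow> sched j \<notin> F \<longrightarrow>
            fst (out j ! m) \<in> {..<n} - F \<longrightarrow> (\<exists>i. rcv i = Some (j, m)))"

definition decides :: "'v alg \<Rightarrow> (nat \<Rightarrow> nat \<Rightarrow> 'v uexp) \<Rightarrow> nat \<Rightarrow> 'v option \<Rightarrow> bool" where
  "decides A st p d \<longleftrightarrow> (\<exists>i. alg_dec A (st i p) = Some d)"

text \<open>A solves k-set agreement in the system with n processes, up to t crashes
(decisions in V \<union> {bottom}, encoded as 'v option with None = bottom).
Decisions are irrevocable.\<close>

definition solves_kset :: "'v alg \<Rightarrow> nat \<Rightarrow> nat \<Rightarrow> nat \<Rightarrow> bool" where
  "solves_kset A n t k \<longleftrightarrow>
     (\<forall>F inp sched rcv out st. card F \<le> t \<longrightarrow> is_run A n F inp sched rcv out st \<longrightarrow>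
        (let C = {..<n} - F in
          (\<forall>p<n. \<forall>i i' d. i \<le> i' \<longrightarrow> alg_dec A (st i p) = Some d \<longrightarrow>
                 alg_dec A (st i' p) = Some d) \<and>
          (\<forall>v. (\<forall>p\<in>C. inp p = v) \<longrightarrow>
                 (\<forall>p\<in>C. \<forall>d. decides A st p d \<longrightarrow> d = Some v)) \<and>
          (finite {d. \<exists>p\<in>C. decides A st p d} \<and> card {d. \<exists>p\<in>C. decides A st p d} \<le> k) \<and>
          (\<forall>p\<in>C. \<exists>d. decides A st p d)))"

end

theory Submission
  imports Defs
begin

datatype 'v ast = AS (inpv: 'v) (vw: "(nat \<times> 'v) list")
  (reps: "(nat \<times> (nat \<times> 'v) list) list") (dcs: "'v option option")

fun enc_pair :: "nat \<times> 'v \<Rightarrow> 'v uexp" where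
  "enc_pair (q, v) = UList [UNat q, UVal v]"

definition enc_view :: "(nat \<times> 'v) list \<Rightarrow> 'v uexp" where
  "enc_view xs = UList (map enc_pair xs)"

fun dec_pair :: "'v uexp \<Rightarrow> (nat \<times> 'v) list" where
  "dec_pair (UList [UNat q, UVal v]) = [(q, v)]"
| "dec_pair _ = []"

fun dec_view :: "'v uexp \<Rightarrow> (nat \<times> 'v) list" where
  "dec_view (UList xs) = concat (map dec_pair xs)"
| "dec_view _ = []"

lemma dec_enc_view[simp]: "dec_view (enc_view xs) = xs"
  unfolding enc_view_def by (induction xs) auto

fun enc_rep :: "nat \<times> (nat \<times> 'v) list \<Rightarrow> 'v uexp" where
  "enc_rep (q, w) = UList [UNat q, enc_view w]"

fun dec_rep :: "'v uexp \<Rightarrow> (nat \<times> (nat \<times> 'v) list) list" where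
  "dec_rep (UList [UNat q, w]) = [(q, dec_view w)]"
| "dec_rep _ = []"

lemma dec_enc_reps[simp]: "concat (map (dec_rep \<circ> enc_rep) xs) = xs"
  by (induction xs) auto

fun enc_dec :: "'v option option \<Rightarrow> 'v uexp" where
  "enc_dec None = UList []"
| "enc_dec (Some None) = UNat 0"
| "enc_dec (Some (Some v)) = UVal v"

fun dec_dec :: "'v uexp \<Rightarrow> 'v option option" where
  "dec_dec (UVal v) = Some (Some v)"
| "dec_dec (UNat _) = Some None"
| "dec_dec (UList _) = None"

lemma dec_enc_dec[simp]: "dec_dec (enc_dec d) = d"
  by (cases d rule: enc_dec.cases) auto

fun enc_st :: "'v ast \<Rightarrow> 'v uexp" where
  "enc_st (AS v w r d) = UList [UVal v, enc_view w, UList (map enc_rep r), enc_dec d]"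

fun dec_st :: "'v uexp \<Rightarrow> 'v ast" where
  "dec_st (UList [UVal v, w, UList r, d]) = AS v (dec_view w) (concat (map dec_rep r)) (dec_dec d)"
| "dec_st _ = AS undefined [] [] None"

lemma dec_enc_st[simp]: "dec_st (enc_st s) = s"
  by (cases s) auto

definition rview :: "(nat \<times> (nat \<times> 'v) list) option \<Rightarrow> (nat \<times> 'v) list" where
  "rview rc = (case rc of None \<Rightarrow> [] | Some qx \<Rightarrow> snd qx)"

definition newview :: "nat \<Rightarrow> 'v ast \<Rightarrow> (nat \<times> (nat \<times> 'v) list) option \<Rightarrow> (nat \<times> 'v) list" where
  "newview p s rc = (p, inpv s) # rview rc @ vw s"

definition newreps :: "'v ast \<Rightarrow> (nat \<times> (nat \<times> 'v) list) option \<Rightarrow> (nat \<times> (nat \<times> 'v) list) list" where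
  "newreps s rc = (case rc of None \<Rightarrow> reps s | Some qx \<Rightarrow> qx # reps s)"

definition reporters :: "(nat \<times> (nat \<times> 'v) list) list \<Rightarrow> (nat \<times> 'v) set \<Rightarrow> nat set" where
  "reporters r V = {q. \<exists>x. (q, x) \<in> set r \<and> set x = V}"

definition decval :: "nat \<Rightarrow> 'v \<Rightarrow> (nat \<times> 'v) set \<Rightarrow> 'v option" where
  "decval t v V = (if card {y \<in> V. snd y \<noteq> v} \<le> t then Some v else None)"

definition newdec :: "nat \<Rightarrow> nat \<Rightarrow> nat \<Rightarrow> 'v ast \<Rightarrow> (nat \<times> (nat \<times> 'v) list) option \<Rightarrow> 'v option option" where
  "newdec n t p s rc = (if dcs s = None \<and> n - t \<le> card (reporters (newreps s rc) (set (newview p s rc)))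
      then Some (decval t (inpv s) (set (newview p s rc))) else dcs s)"

definition astep :: "nat \<Rightarrow> nat \<Rightarrow> nat \<Rightarrow> 'v ast \<Rightarrow> (nat \<times> (nat \<times> 'v) list) option \<Rightarrow> 'v ast \<times> (nat \<times> 'v uexp) list" where
  "astep n t p s rc = (AS (inpv s) (newview p s rc) (newreps s rc) (newdec n t p s rc),
     if set (newview p s rc) = set (vw s) then [] else map (\<lambda>q. (q, enc_view (newview p s rc))) [0..<n])"

definition alg :: "nat \<Rightarrow> nat \<Rightarrow> 'v alg" where
  "alg n t = \<lparr> alg_init = (\<lambda>p v. enc_st (AS v [] [] None)),
     alg_trans = (\<lambda>p s rc. (enc_st (fst (astep n t p (dec_st s) (map_option (\<lambda>(q, m). (q, dec_view m)) rc))),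
                            snd (astep n t p (dec_st s) (map_option (\<lambda>(q, m). (q, dec_view m)) rc)))),
     alg_dec = (\<lambda>s. dcs (dec_st s)) \<rparr>"

lemma count_vals:
  fixes T :: "('a \<times> 'b) set"
  assumes fT: "finite T" and fW: "finite W" and h: "\<forall>w\<in>W. card {y \<in> T. snd y \<noteq> w} \<le> t"
  shows "card W * (card T - t) \<le> card T"
proof -
  let ?A = "\<lambda>w. {y \<in> T. snd y = w}"
  have eq: "card T = card (?A w) + card {y \<in> T. snd y \<noteq> w}" for w
  proof -
    have "card (?A w \<union> {y \<in> T. snd y \<noteq> w}) = card (?A w) + card {y \<in> T. snd y \<noteq> w}"
      by (rule card_Un_disjoint) (use fT in auto)
    moreover have "?A w \<union> {y \<in> T. snd y \<noteq> w} = T" by auto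
    ultimately show ?thesis by simp
  qed
  have "card W * (card T - t) = (\<Sum>w\<in>W. card T - t)" by simp
  also have "\<dots> \<le> (\<Sum>w\<in>W. card (?A w))"
  proof (rule sum_mono)
    fix w assume "w \<in> W"
    then have "card {y \<in> T. snd y \<noteq> w} \<le> t" using h by blast
    then show "card T - t \<le> card (?A w)" using eq[of w] by linarith
  qed
  also have "\<dots> = card (\<Union>w\<in>W. ?A w)"
    by (rule card_UN_disjoint[symmetric]) (use fW fT in auto)
  also have "\<dots> \<le> card T"
    by (rule card_mono[OF fT]) auto
  finally show ?thesis .
qed

lemma arith_bound:
  fixes j s n t :: nat
  assumes "j * (s - t) \<le> s" "n - t \<le> s" "2 * t < n"
  shows "j * (n - 2 * t) \<le> n - t"
proof (cases "j = 0")
  case True then show ?thesis by simp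
next
  case False
  obtain e where s: "s = (n - t) + e" using assms(2) le_Suc_ex by blast
  have "s - t = (n - 2 * t) + e" using s assms(3) by simp
  then have "j * (n - 2 * t) + j * e \<le> (n - t) + e" using assms(1) s by (simp add: algebra_simps)
  moreover have "e \<le> j * e" using False by simp
  ultimately show ?thesis by linarith
qed

lemma chain_min:
  assumes "finite \<V>" "\<V> \<noteq> {}" "\<forall>X\<in>\<V>. \<forall>Y\<in>\<V>. X \<subseteq> Y \<or> Y \<subseteq> X"
  shows "\<exists>T\<in>\<V>. \<forall>X\<in>\<V>. T \<subseteq> X"
  using assms
proof (induction \<V> rule: finite_ne_induct)
  case (singleton x) then show ?case by simp
next
  case (insert x F)
  have "\<forall>X\<in>F. \<forall>Y\<in>F. X \<subseteq> Y \<or> Y \<subseteq> X" using insert.prems by simp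
  then obtain T where T: "T \<in> F" "\<forall>X\<in>F. T \<subseteq> X" using insert.IH by meson
  have c: "x \<subseteq> T \<or> T \<subseteq> x" using insert.prems T(1) by simp
  show ?case
  proof (cases "x \<subseteq> T")
    case True
    then have "\<forall>X\<in>insert x F. x \<subseteq> X" using T(2) by auto
    then show ?thesis by simp
  next
    case False
    then have "T \<subseteq> x" using c by simp
    then have "\<forall>X\<in>insert x F. T \<subseteq> X" using T(2) by simp
    then show ?thesis using T(1) by blast
  qed
qed

lemma stab_gen:
  fixes f :: "nat \<Rightarrow> 'a set"
  assumes mono: "\<And>i. f i \<subseteq> f (Suc i)" and bnd: "\<And>i. f i \<subseteq> U" and fU: "finite U"
  shows "\<exists>N. \<forall>i\<ge>N. f i = f N"
proof -
  have fin: "finite (card ` range f)"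
    by (rule finite_subset[of _ "{..card U}"]) (use bnd fU in \<open>auto intro: card_mono\<close>)
  have "Max (card ` range f) \<in> card ` range f" by (rule Max_in[OF fin]) auto
  then obtain N where N: "card (f N) = Max (card ` range f)" by auto
  have "f i = f N" if "i \<ge> N" for i
  proof -
    have sub: "f N \<subseteq> f i" using lift_Suc_mono_le[of f, OF mono that] .
    have "card (f i) \<le> card (f N)" using N Max_ge[OF fin] by auto
    moreover have "finite (f i)" using bnd fU finite_subset by blast
    ultimately show ?thesis using card_subset_eq sub by (metis antisym card_mono)
  qed
  then show ?thesis by blast
qed

lemma transition: "\<not> P 0 \<Longrightarrow> P N \<Longrightarrow> \<exists>j<N. \<not> P j \<and> P (Suc j)"
  by (induction N) (auto, metis less_Suc_eq)

locale arun =
  fixes n t :: nat and F :: "nat set" and inp :: "nat \<Rightarrow> 'v" and sched :: "nat \<Rightarrow> nat"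
    and rcv :: "nat \<Rightarrow> (nat \<times> nat) option" and out :: "nat \<Rightarrow> (nat \<times> 'v uexp) list"
    and st :: "nat \<Rightarrow> nat \<Rightarrow> 'v uexp"
  assumes run: "is_run (alg n t) n F inp sched rcv out st"
begin

definition S :: "nat \<Rightarrow> nat \<Rightarrow> 'v ast" where "S i p = dec_st (st i p)"
definition R :: "nat \<Rightarrow> (nat \<times> (nat \<times> 'v) list) option" where
  "R i = map_option (\<lambda>(q, m). (q, dec_view m)) (msg_in sched rcv out i)"

lemma S0: "S 0 p = AS (inp p) [] [] None"
  using run unfolding is_run_def S_def alg_def by simp

lemma Sstep: "S (Suc i) (sched i) = fst (astep n t (sched i) (S i (sched i)) (R i))"
  and out_eq: "out i = snd (astep n t (sched i) (S i (sched i)) (R i))"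
proof -
  have "alg_trans (alg n t) (sched i) (st i (sched i)) (msg_in sched rcv out i) = (st (Suc i) (sched i), out i)"
    using run unfolding is_run_def by blast
  then show "S (Suc i) (sched i) = fst (astep n t (sched i) (S i (sched i)) (R i))"
    unfolding S_def R_def alg_def by (simp del: enc_st.simps) (metis dec_enc_st)
  show "out i = snd (astep n t (sched i) (S i (sched i)) (R i))"
    using \<open>alg_trans _ _ _ _ = _\<close> unfolding S_def R_def alg_def by (simp del: enc_st.simps)
qed

lemma Sother: "q \<noteq> sched i \<Longrightarrow> S (Suc i) q = S i q"
  using run unfolding is_run_def S_def by simp

lemma sched_lt: "sched i < n"
  using run unfolding is_run_def by blast

definition VS :: "nat \<Rightarrow> nat \<Rightarrow> (nat \<times> 'v) set" where "VS i p = set (vw (S i p))"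

lemma inpv_S: "inpv (S i p) = inp p"
proof (induction i arbitrary: p)
  case 0 then show ?case by (simp add: S0)
next
  case (Suc i)
  then show ?case
    by (cases "p = sched i") (simp_all add: Sstep Sother astep_def)
qed

lemma VS_step: "VS (Suc i) (sched i) = insert (sched i, inp (sched i)) (set (rview (R i)) \<union> VS i (sched i))"
  by (simp add: VS_def Sstep astep_def newview_def inpv_S)

lemma VS_other: "q \<noteq> sched i \<Longrightarrow> VS (Suc i) q = VS i q"
  by (simp add: VS_def Sother)

lemma VS0: "VS 0 p = {}"
  by (simp add: VS_def S0)

lemma VS_Suc_mono: "VS i p \<subseteq> VS (Suc i) p"
  by (cases "p = sched i") (auto simp: VS_step VS_other)

lemma VS_mono: "i \<le> i' \<Longrightarrow> VS i p \<subseteq> VS i' p"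
  using VS_Suc_mono by (rule lift_Suc_mono_le)

lemma own_in: "(sched i, inp (sched i)) \<in> VS (Suc i) (sched i)"
  by (simp add: VS_step)

lemma out_struct: "out i = (if VS (Suc i) (sched i) = VS i (sched i) then []
   else map (\<lambda>q. (q, enc_view (vw (S (Suc i) (sched i))))) [0..<n])"
  by (simp add: out_eq VS_def Sstep astep_def)

lemma R_Some: assumes "R i = Some (q, x)"
  shows "\<exists>j<i. q = sched j \<and> x = vw (S (Suc j) (sched j))"
proof -
  obtain j m where r: "rcv i = Some (j, m)" and q: "q = sched j" and x: "x = dec_view (snd (out j ! m))"
    using assms unfolding R_def msg_in_def by (auto split: option.splits)
  have "j < i" "m < length (out j)"
    using run r unfolding is_run_def by blast+
  then have "out j ! m = (m, enc_view (vw (S (Suc j) (sched j))))"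
    using out_struct[of j] by (auto split: if_splits)
  then show ?thesis using x q \<open>j < i\<close> by auto
qed

lemma rview_in: "y \<in> set (rview (R i)) \<Longrightarrow> \<exists>j<i. y \<in> VS (Suc j) (sched j)"
  by (auto simp: rview_def VS_def split: option.splits dest!: R_Some[OF sym])

lemma VS_wf: "y \<in> VS i p \<Longrightarrow> fst y < n \<and> snd y = inp (fst y)"
proof (induction i arbitrary: p y rule: less_induct)
  case (less i)
  show ?case
  proof (cases i)
    case 0 then show ?thesis using less.prems by (simp add: VS0)
  next
    case (Suc i0)
    show ?thesis
    proof (cases "p = sched i0")
      case True
      then have "y = (sched i0, inp (sched i0)) \<or> y \<in> set (rview (R i0)) \<or> y \<in> VS i0 p"
        using less.prems Suc VS_step by auto
      moreover have "fst y < n \<and> snd y = inp (fst y)" if yr: "y \<in> set (rview (R i0))"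
      proof -
        obtain j where "j < i0" "y \<in> VS (Suc j) (sched j)" using rview_in[OF yr] by blast
        then show ?thesis using less.IH[of "Suc j"] Suc by simp
      qed
      moreover have "fst y < n \<and> snd y = inp (fst y)" if "y \<in> VS i0 p"
        using less.IH[of i0] that Suc by blast
      ultimately show ?thesis
        using Suc sched_lt by auto
    next
      case False
      then show ?thesis using less.prems less.IH[of i0] Suc VS_other by auto
    qed
  qed
qed

definition RS :: "nat \<Rightarrow> nat \<Rightarrow> (nat \<times> (nat \<times> 'v) list) set" where "RS i p = set (reps (S i p))"

lemma RS_step: "RS (Suc i) (sched i) = set_option (R i) \<union> RS i (sched i)"
  by (simp add: RS_def Sstep astep_def newreps_def split: option.splits)

lemma RS_other: "q \<noteq> sched i \<Longrightarrow> RS (Suc i) q = RS i q"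
  by (simp add: RS_def Sother)

lemma RS_Suc_mono: "RS i p \<subseteq> RS (Suc i) p"
  by (cases "p = sched i") (auto simp: RS_step RS_other)

lemma RS_mono: "i \<le> i' \<Longrightarrow> RS i p \<subseteq> RS i' p"
  using RS_Suc_mono by (rule lift_Suc_mono_le)

lemma RS_wf: "(q, x) \<in> RS i p \<Longrightarrow> \<exists>j. q = sched j \<and> x = vw (S (Suc j) q)"
proof (induction i arbitrary: p)
  case 0 then show ?case by (simp add: RS_def S0)
next
  case (Suc i)
  show ?case
  proof (cases "p = sched i")
    case True
    then have "R i = Some (q, x) \<or> (q, x) \<in> RS i p" using Suc.prems RS_step by auto
    then show ?thesis using Suc.IH R_Some by blast
  next
    case False then show ?thesis using Suc RS_other by auto
  qed
qed

lemma dcs_step: "dcs (S (Suc i) (sched i)) = (if dcs (S i (sched i)) = None \<and>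
    n - t \<le> card (reporters (reps (S (Suc i) (sched i))) (VS (Suc i) (sched i)))
  then Some (decval t (inp (sched i)) (VS (Suc i) (sched i))) else dcs (S i (sched i)))"
  by (simp add: Sstep astep_def newdec_def VS_def inpv_S)

lemma dcs_other: "q \<noteq> sched i \<Longrightarrow> dcs (S (Suc i) q) = dcs (S i q)"
  by (simp add: Sother)

lemma dcs_Suc: "dcs (S i p) = Some d \<Longrightarrow> dcs (S (Suc i) p) = Some d"
  by (cases "p = sched i") (auto simp: dcs_step dcs_other)

lemma dcs_persist: "dcs (S i p) = Some d \<Longrightarrow> i \<le> i' \<Longrightarrow> dcs (S i' p) = Some d"
  by (induction i') (auto simp: le_Suc_eq intro: dcs_Suc)

definition committed :: "nat \<Rightarrow> (nat \<times> 'v) set \<Rightarrow> nat set \<Rightarrow> bool" where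
  "committed p V Q \<longleftrightarrow> Q \<subseteq> {..<n} \<and> n - t \<le> card Q \<and> (\<forall>q\<in>Q. \<exists>j. sched j = q \<and> VS (Suc j) q = V)"

lemma dcs_committed: "dcs (S i p) = Some d \<Longrightarrow> \<exists>V Q. committed p V Q \<and> d = decval t (inp p) V"
proof (induction i arbitrary: p)
  case 0 then show ?case by (simp add: S0)
next
  case (Suc i)
  show ?case
  proof (cases "p = sched i \<and> dcs (S i p) = None")
    case True
    let ?V = "VS (Suc i) p"
    let ?Q = "reporters (reps (S (Suc i) p)) ?V"
    have d: "d = decval t (inp p) ?V" and c: "n - t \<le> card ?Q"
      using Suc.prems True dcs_step[of i] by (auto split: if_splits)
    have "\<exists>j. sched j = q \<and> VS (Suc j) q = ?V" if qQ: "q \<in> ?Q" for q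
    proof -
      obtain x where "(q, x) \<in> RS (Suc i) p" "set x = ?V"
        using qQ unfolding reporters_def RS_def by auto
      then show ?thesis using RS_wf unfolding VS_def by metis
    qed
    moreover have "?Q \<subseteq> {..<n}"
      using calculation sched_lt by blast
    ultimately have "committed p ?V ?Q" using c unfolding committed_def by blast
    then show ?thesis using d by blast
  next
    case False
    then have "dcs (S i p) = Some d"
      using Suc.prems dcs_step[of i] dcs_other[of p i] by (cases "p = sched i") (auto split: if_splits)
    then show ?thesis using Suc.IH by blast
  qed
qed

end

locale arun2 = arun +
  assumes cardF: "card F \<le> t" and nt: "2 * t < n"
begin

lemma F_sub: "F \<subseteq> {..<n}"
  using run unfolding is_run_def by blast

lemma finF: "finite F"
  using F_sub finite_subset by blast

lemma committed_chain:
  assumes "committed p V Q" "committed p' V' Q'"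
  shows "V \<subseteq> V' \<or> V' \<subseteq> V"
proof -
  have fin: "finite Q" "finite Q'" "Q \<union> Q' \<subseteq> {..<n}"
    using assms unfolding committed_def by (auto intro: finite_subset)
  have "card (Q \<union> Q') \<le> n"
    using card_mono[OF _ fin(3)] by simp
  moreover have "card (Q \<union> Q') + card (Q \<inter> Q') = card Q + card Q'"
    using card_Un_Int[OF fin(1,2)] by simp
  moreover have "card Q + card Q' > n"
    using assms nt unfolding committed_def by linarith
  ultimately have "Q \<inter> Q' \<noteq> {}" by auto
  then obtain r where "r \<in> Q" "r \<in> Q'" by blast
  then obtain j j' where "VS (Suc j) r = V" "VS (Suc j') r = V'"
    using assms unfolding committed_def by blast
  then show ?thesis
    using VS_mono[of "Suc j" "Suc j'" r] VS_mono[of "Suc j'" "Suc j" r] by (cases "j \<le> j'") auto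
qed

lemma committed_card:
  assumes "committed p V Q"
  shows "finite V \<and> n - t \<le> card V"
proof -
  have Qn: "Q \<noteq> {}" using assms nt unfolding committed_def by auto
  then obtain q where "q \<in> Q" by blast
  then obtain j where "VS (Suc j) q = V" using assms unfolding committed_def by blast
  then have finV: "finite V" unfolding VS_def by auto
  have "Q \<subseteq> fst ` V"
  proof
    fix q assume "q \<in> Q"
    then obtain j where "sched j = q" "VS (Suc j) q = V" using assms unfolding committed_def by blast
    then show "q \<in> fst ` V" using own_in[of j] by force
  qed
  then have "card Q \<le> card V"
    using card_mono[OF finite_imageI[OF finV]] card_image_le[OF finV, of fst] by (meson le_trans)
  then show ?thesis using finV assms unfolding committed_def by auto
qed

lemma committed_wf:
  assumes "committed p V Q" "y \<in> V"
  shows "fst y < n \<and> snd y = inp (fst y)"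
proof -
  have "Q \<noteq> {}" using assms nt unfolding committed_def by auto
  then obtain q where "q \<in> Q" by blast
  then obtain j where "VS (Suc j) q = V" using assms unfolding committed_def by blast
  then show ?thesis using VS_wf assms(2) by blast
qed

lemma committed_valid:
  assumes "committed p V Q" "\<forall>q\<in>{..<n} - F. inp q = v"
  shows "card {y \<in> V. snd y \<noteq> v} \<le> t"
proof -
  have "inj_on fst {y \<in> V. snd y \<noteq> v}"
    using committed_wf[OF assms(1)] by (intro inj_onI) (metis prod.collapse mem_Collect_eq)
  moreover have "fst ` {y \<in> V. snd y \<noteq> v} \<subseteq> F"
    using committed_wf[OF assms(1)] assms(2) by fastforce
  ultimately have "card {y \<in> V. snd y \<noteq> v} \<le> card F"
    using card_inj_on_le finF by blast
  then show ?thesis using cardF by linarith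
qed

definition C :: "nat set" where "C = {..<n} - F"

lemma card_C: "n - t \<le> card C"
proof -
  have "card C = n - card F" unfolding C_def using card_Diff_subset[OF finF F_sub] by simp
  then show ?thesis using cardF by linarith
qed

lemma finC: "finite C" unfolding C_def by simp

lemma C_sched: "p \<in> C \<Longrightarrow> \<exists>i\<ge>T. sched i = p"
  using run unfolding is_run_def C_def by blast

lemma VS_U: "VS i p \<subseteq> (\<lambda>q. (q, inp q)) ` {..<n}"
  using VS_wf by (force simp: image_iff)

lemma VS_stab: "\<exists>N. \<forall>i\<ge>N. VS i p = VS N p"
  by (rule stab_gen[where f="\<lambda>i. VS i p", OF VS_Suc_mono VS_U]) simp

definition Nst where "Nst p = (SOME N. \<forall>i\<ge>N. VS i p = VS N p)"
definition Vf where "Vf p = VS (Nst p) p"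

lemma Vf_eq: "Nst p \<le> i \<Longrightarrow> VS i p = Vf p"
  unfolding Vf_def Nst_def using someI_ex[OF VS_stab[of p]] by blast

lemma final_bcast:
  assumes "p \<in> C"
  shows "\<exists>j. sched j = p \<and> VS (Suc j) p = Vf p \<and>
     out j = map (\<lambda>q. (q, enc_view (vw (S (Suc j) p)))) [0..<n]"
proof -
  obtain i where i: "i \<ge> Nst p" "sched i = p" using C_sched[OF assms] by blast
  then have "(p, inp p) \<in> Vf p" using own_in[of i] Vf_eq[of p "Suc i"] by simp
  then have "\<not> VS 0 p = Vf p" by (auto simp: VS0)
  then obtain j where j: "\<not> VS j p = Vf p" "VS (Suc j) p = Vf p"
    using transition[of "\<lambda>j. VS j p = Vf p" "Nst p"] Vf_eq[of p "Nst p"] by auto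
  then have "sched j = p" using VS_other by metis
  then show ?thesis using j out_struct[of j] by auto
qed

lemma deliver:
  assumes "p \<in> C" "q \<in> C"
  shows "\<exists>i x. sched i = q \<and> R i = Some (p, x) \<and> set x = Vf p"
proof -
  obtain j where j: "sched j = p" "VS (Suc j) p = Vf p"
     "out j = map (\<lambda>q. (q, enc_view (vw (S (Suc j) p)))) [0..<n]"
    using final_bcast[OF assms(1)] by blast
  have qn: "q < n" using assms(2) unfolding C_def by auto
  have oq: "out j ! q = (q, enc_view (vw (S (Suc j) p)))" and lq: "q < length (out j)"
    using j(3) qn by auto
  have "sched j \<notin> F" "fst (out j ! q) \<in> {..<n} - F" using assms j(1) oq unfolding C_def by auto
  then obtain i where ri: "rcv i = Some (j, q)"
    using run lq unfolding is_run_def by blast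
  then have "fst (out j ! q) = sched i" using run unfolding is_run_def by blast
  then have si: "sched i = q" using oq by simp
  have "R i = Some (p, vw (S (Suc j) p))"
    using ri oq j(1) unfolding R_def msg_in_def by simp
  then show ?thesis using si j(2) unfolding VS_def by blast
qed

lemma Vf_sub:
  assumes "p \<in> C" "q \<in> C"
  shows "Vf p \<subseteq> Vf q"
proof -
  obtain i x where i: "sched i = q" "R i = Some (p, x)" "set x = Vf p"
    using deliver[OF assms] by blast
  have "Vf p \<subseteq> VS (Suc i) q" using i VS_step[of i] by (auto simp: rview_def)
  also have "\<dots> \<subseteq> VS (max (Suc i) (Nst q)) q" by (rule VS_mono) simp
  also have "\<dots> = Vf q" by (rule Vf_eq) simp
  finally show ?thesis .
qed

lemma eventually_decides:
  assumes "p \<in> C"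
  shows "\<exists>i d. dcs (S i p) = Some d"
proof -
  have "\<forall>q\<in>C. \<exists>i x. sched i = p \<and> R i = Some (q, x) \<and> set x = Vf q"
    using deliver assms by blast
  then obtain iq where iq: "\<And>q. q \<in> C \<Longrightarrow> \<exists>x. sched (iq q) = p \<and> R (iq q) = Some (q, x) \<and> set x = Vf q"
    by metis
  define M where "M = Max (insert (Nst p) (iq ` C))"
  have M: "Nst p \<le> M" "\<And>q. q \<in> C \<Longrightarrow> iq q \<le> M"
    unfolding M_def using finC by auto
  obtain i where i: "i \<ge> Suc M" "sched i = p" using C_sched[OF assms] by blast
  have V: "VS (Suc i) p = Vf p" using Vf_eq M i by simp
  have "C \<subseteq> reporters (reps (S (Suc i) p)) (VS (Suc i) p)"
  proof
    fix q assume q: "q \<in> C"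
    then obtain x where x: "sched (iq q) = p" "R (iq q) = Some (q, x)" "set x = Vf q" using iq by blast
    have "(q, x) \<in> RS (Suc (iq q)) p" using x RS_step[of "iq q"] by auto
    also have "\<dots> \<subseteq> RS (Suc i) p" by (rule RS_mono) (use M(2)[OF q] i in simp)
    finally have "(q, x) \<in> set (reps (S (Suc i) p))" unfolding RS_def .
    moreover have "set x = VS (Suc i) p" using x(3) V Vf_sub[OF q assms] Vf_sub[OF assms q] by simp
    ultimately show "q \<in> reporters (reps (S (Suc i) p)) (VS (Suc i) p)"
      unfolding reporters_def by blast
  qed
  moreover have "finite (reporters (reps (S (Suc i) p)) (VS (Suc i) p))"
    by (rule finite_subset[of _ "fst ` set (reps (S (Suc i) p))"]) (force simp: reporters_def image_iff, simp)
  ultimately have "n - t \<le> card (reporters (reps (S (Suc i) p)) (VS (Suc i) p))"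
    using card_C card_mono le_trans by blast
  then show ?thesis using dcs_step[of i] i(2) by (cases "dcs (S i p)") auto
qed

lemma decided_committed:
  assumes "dcs (S i p) = Some (Some w)"
  shows "\<exists>V. (\<exists>p Q. committed p V Q) \<and> card {y \<in> V. snd y \<noteq> w} \<le> t \<and> w = inp p"
proof -
  obtain V Q where "committed p V Q" "Some w = decval t (inp p) V"
    using dcs_committed[OF assms] by blast
  then show ?thesis unfolding decval_def by (auto split: if_splits)
qed

lemma agreement:
  assumes k: "real k > real (n - t) / real (n - 2 * t)"
  defines "D \<equiv> {d. \<exists>p\<in>C. \<exists>i. dcs (S i p) = Some d}"
  shows "finite D \<and> card D \<le> k"
proof -
  define D' where "D' = {w. Some w \<in> D}"
  have D'sub: "D' \<subseteq> inp ` {..<n}"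
  proof
    fix w assume "w \<in> D'"
    then obtain p i where "p \<in> C" "dcs (S i p) = Some (Some w)" unfolding D'_def D_def by blast
    then show "w \<in> inp ` {..<n}" using decided_committed unfolding C_def by blast
  qed
  then have finD': "finite D'" using finite_subset by blast
  have Dsub: "D \<subseteq> insert None (Some ` D')" 
  proof
    fix d assume "d \<in> D"
    then show "d \<in> insert None (Some ` D')" unfolding D'_def by (cases d) auto
  qed
  then have finD: "finite D" using finD' finite_subset by blast
  have cD: "card D \<le> Suc (card D')"
  proof -
    have "card D \<le> card (insert None (Some ` D'))"
      by (rule card_mono[OF _ Dsub]) (use finD' in simp)
    also have "\<dots> \<le> Suc (card (Some ` D'))"
      using finD' by (simp add: card_insert_if)
    also have "card (Some ` D') = card D'"
      by (rule card_image) simp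
    finally show ?thesis .
  qed
  have npos: "0 < n - 2 * t" "0 < n - t" using nt by auto
  have kpos: "1 \<le> k"
  proof -
    have "0 < real (n - t) / real (n - 2 * t)" using npos by simp
    then have "0 < real k" using k by (rule less_trans)
    then show ?thesis by simp
  qed
  have "card D' < k"
  proof (cases "D' = {}")
    case True then show ?thesis using kpos by simp
  next
    case False
    have ex: "\<exists>V. (\<exists>p Q. committed p V Q) \<and> card {y \<in> V. snd y \<noteq> w} \<le> t" if wD: "w \<in> D'" for w
    proof -
      obtain p i where "p \<in> C" "dcs (S i p) = Some (Some w)" using wD unfolding D'_def D_def by blast
      then show ?thesis using decided_committed by blast
    qed
    define g where "g w = (SOME V. (\<exists>p Q. committed p V Q) \<and> card {y \<in> V. snd y \<noteq> w} \<le> t)" for w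
    have g: "(\<exists>p Q. committed p (g w) Q) \<and> card {y \<in> g w. snd y \<noteq> w} \<le> t" if "w \<in> D'" for w
      unfolding g_def using someI_ex[OF ex[OF that]] .
    have pw: "\<forall>X\<in>g ` D'. \<forall>Y\<in>g ` D'. X \<subseteq> Y \<or> Y \<subseteq> X"
    proof (intro ballI)
      fix X Y assume "X \<in> g ` D'" "Y \<in> g ` D'"
      then obtain a b where "a \<in> D'" "b \<in> D'" "X = g a" "Y = g b" by blast
      then obtain p Q p' Q' where "committed p X Q" "committed p' Y Q'" using g by blast
      then show "X \<subseteq> Y \<or> Y \<subseteq> X" by (rule committed_chain)
    qed
    have "\<exists>T\<in>g ` D'. \<forall>X\<in>g ` D'. T \<subseteq> X"
      by (rule chain_min[OF _ _ pw]) (use finD' False in simp_all)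
    then obtain T where T: "T \<in> g ` D'" "\<And>w. w \<in> D' \<Longrightarrow> T \<subseteq> g w" by blast
    obtain w0 where "w0 \<in> D'" "T = g w0" using T(1) by blast
    then obtain p0 Q0 where "committed p0 T Q0" using g by blast
    then have Tc: "finite T" "n - t \<le> card T" using committed_card by blast+
    have "\<forall>w\<in>D'. card {y \<in> T. snd y \<noteq> w} \<le> t"
    proof
      fix w assume w: "w \<in> D'"
      obtain p1 Q1 where "committed p1 (g w) Q1" using g[OF w] by blast
      then have "finite (g w)" using committed_card by blast
      then have "card {y \<in> T. snd y \<noteq> w} \<le> card {y \<in> g w. snd y \<noteq> w}"
        using T(2)[OF w] by (intro card_mono) auto
      then show "card {y \<in> T. snd y \<noteq> w} \<le> t" using g[OF w] by linarith
    qed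
    then have "card D' * (card T - t) \<le> card T" using count_vals Tc(1) finD' by blast
    then have "card D' * (n - 2 * t) \<le> n - t" using arith_bound Tc(2) nt by blast
    then have "real (card D') * real (n - 2 * t) \<le> real (n - t)"
      by (metis of_nat_le_iff of_nat_mult)
    then have "real (card D') \<le> real (n - t) / real (n - 2 * t)"
      using npos by (simp add: field_simps)
    then have "real (card D') < real k" using k by (rule le_less_trans)
    then show ?thesis by simp
  qed
  then show ?thesis using cD finD by simp
qed

end

theorem theorem8:
  fixes n t k :: nat
  assumes "n > 2 * t"
    and "real k > real (n - t) / real (n - 2 * t)"
  shows "\<exists>A :: 'v alg. solves_kset A n t k"
proof
  show "solves_kset (alg n t :: 'v alg) n t k"
    unfolding solves_kset_def Let_def
  proof (intro allI impI)
    fix F inp sched rcv out st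
    assume cF: "card F \<le> t" and r: "is_run (alg n t :: 'v alg) n F inp sched rcv out st"
    interpret arun2 n t F inp sched rcv out st
      by unfold_locales (use r cF assms(1) in auto)
    have dec_eq: "alg_dec (alg n t) (st i p) = dcs (S i p)" for i p
      by (simp add: alg_def S_def)
    have decs: "decides (alg n t) st p d \<longleftrightarrow> (\<exists>i. dcs (S i p) = Some d)" for p d
      by (simp add: decides_def dec_eq)
    have Ceq: "{..<n} - F = C" by (simp add: C_def)
    show "(\<forall>p<n. \<forall>i i' d. i \<le> i' \<longrightarrow> alg_dec (alg n t) (st i p) = Some d \<longrightarrow>
                 alg_dec (alg n t) (st i' p) = Some d) \<and>
          (\<forall>v. (\<forall>p\<in>{..<n} - F. inp p = v) \<longrightarrow>
                 (\<forall>p\<in>{..<n} - F. \<forall>d. decides (alg n t) st p d \<longrightarrow> d = Some v)) \<and>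
          (finite {d. \<exists>p\<in>{..<n} - F. decides (alg n t) st p d} \<and>
             card {d. \<exists>p\<in>{..<n} - F. decides (alg n t) st p d} \<le> k) \<and>
          (\<forall>p\<in>{..<n} - F. \<exists>d. decides (alg n t) st p d)"
    proof (intro conjI)
      show "\<forall>p<n. \<forall>i i' d. i \<le> i' \<longrightarrow> alg_dec (alg n t) (st i p) = Some d \<longrightarrow>
                 alg_dec (alg n t) (st i' p) = Some d"
        unfolding dec_eq using dcs_persist by blast
      show "\<forall>v. (\<forall>p\<in>{..<n} - F. inp p = v) \<longrightarrow>
                 (\<forall>p\<in>{..<n} - F. \<forall>d. decides (alg n t) st p d \<longrightarrow> d = Some v)"
      proof (intro allI impI ballI)
        fix v p d
        assume allv: "\<forall>p\<in>{..<n} - F. inp p = v" and p: "p \<in> {..<n} - F"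
          and "decides (alg n t) st p d"
        then obtain i where "dcs (S i p) = Some d" using decs by blast
        then obtain V Q where c: "committed p V Q" and d: "d = decval t (inp p) V"
          using dcs_committed by blast
        have "card {y \<in> V. snd y \<noteq> v} \<le> t" using committed_valid[OF c allv] .
        then show "d = Some v" using d allv p unfolding decval_def by simp
      qed
      have Deq: "{d. \<exists>p\<in>{..<n} - F. decides (alg n t) st p d} = {d. \<exists>p\<in>C. \<exists>i. dcs (S i p) = Some d}"
        by (simp only: decs Ceq)
      show "finite {d. \<exists>p\<in>{..<n} - F. decides (alg n t) st p d}"
        using agreement[OF assms(2)] Deq by simp
      show "card {d. \<exists>p\<in>{..<n} - F. decides (alg n t) st p d} \<le> k"
        using agreement[OF assms(2)] Deq by simp
      show "\<forall>p\<in>{..<n} - F. \<exists>d. decides (alg n t) st p d"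
        using eventually_decides decs Ceq by blast
    qed
  qed
qed

end
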